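(* Let $t_1<\tau$ be fixed independently of $z$, and for each $z$ let $\mathbf y(t)$ and $\mathbf x_h(t)$ satisfy $$\frac{d}{dt}\mathbf y=\mathbf A\mathbf y+h(\mathbf y)+\mathbf e_{\mathbf y},\qquad \frac{d}{dt}\mathbf x_h=\mathbf A\mathbf x_h+h(\mathbf x_h),\qquad \mathbf x_h(t_1)=\mathbf y(t_1),$$ where $\sup_{t\in[t_1,\tau]}\|\mathbf e_{\mathbf y}(t)\|=O(z^{-1})$, and $h:\mathbb R^4\to\mathbb R^4$ is such that for all $\mathbf x_1,\mathbf x_2$, $h(\mathbf x_1)-h(\mathbf x_2)=\mathbf L_h(\mathbf x_1,\mathbf x_2)(\mathbf x_1-\mathbf x_2)$ for a $4\times4$ matrix $\mathbf L_h(\mathbf x_1,\mathbf x_2)$ whose entries satisfy $|[\mathbf L_h(\mathbf x_1,\mathbf x_2)]_{ij}|\le L_h$, with $L_h>0$ a constant independent of $z$. Then $$\sup_{t\in[t_1,\tau]}\|\mathbf y(t)-\mathbf x_h(t)\|=O(z^{-1}).$$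
   Context: $\mathbf A=\begin{bmatrix}-1&3z&z&z\\0&-3z&0&0\\0&2z&-z&0\\1&0&0&-z\end{bmatrix}$ for $z>0$. $O(z^{-1})$ means bounded by $Kz^{-1}$ with $K$ independent of $z$, for all sufficiently large $z$. *)

theory Defs
  imports "HOL-Analysis.Analysis"
begin

text \<open>Rows/columns indexed by the elements 1,2,3,4 of the numeral type 4
(note 4 = 0 in that type, so index 4 is the last one in the paper's ordering).\<close>

definition matA :: "real \<Rightarrow> real^4^4" where
  "matA z = (\<chi> i j.
     if i = 1 then (if j = 1 then -1 else if j = 2 then 3*z else if j = 3 then z else z)
     else if i = 2 then (if j = 2 then -3*z else 0)
     else if i = 3 then (if j = 2 then 2*z else if j = 3 then -z else 0)
     else (if j = 1 then 1 else if j = 4 then -z else 0))"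

end

theory Submission
  imports Defs
begin


lemma key_ineq:
  fixes d1 d2 d3 d4 r1 r2 r3 r4 z Lh E :: real
  assumes Lh: "Lh \<ge> 0" and E: "E \<ge> 0" and z: "z \<ge> 20 + 120*Lh"
    and r1: "\<bar>r1\<bar> \<le> Lh*(\<bar>d1\<bar>+\<bar>d2\<bar>+\<bar>d3\<bar>+\<bar>d4\<bar>) + E"
    and r2: "\<bar>r2\<bar> \<le> Lh*(\<bar>d1\<bar>+\<bar>d2\<bar>+\<bar>d3\<bar>+\<bar>d4\<bar>) + E"
    and r3: "\<bar>r3\<bar> \<le> Lh*(\<bar>d1\<bar>+\<bar>d2\<bar>+\<bar>d3\<bar>+\<bar>d4\<bar>) + E"
    and r4: "\<bar>r4\<bar> \<le> Lh*(\<bar>d1\<bar>+\<bar>d2\<bar>+\<bar>d3\<bar>+\<bar>d4\<bar>) + E"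
  shows "2*(d1 + 5/3*d2 + d3 + d4) * ((-d1 + 3*z*d2 + z*d3 + z*d4 + r1) + 5/3*(-3*z*d2 + r2)
            + (2*z*d2 - z*d3 + r3) + (d1 - z*d4 + r4))
         + 4*d2*(-3*z*d2 + r2) + 2*d3*(2*z*d2 - z*d3 + r3) + 2*d4*(d1 - z*d4 + r4)
       \<le> (20 + 120*Lh) * ((d1 + 5/3*d2 + d3 + d4)^2 + 2*d2^2 + d3^2 + d4^2) + 25*E^2"
proof -
  define u where "u = d1 + 5/3*d2 + d3 + d4"
  define F where "F = d2^2 + d3^2 + d4^2"
  define Q where "Q = \<bar>u\<bar> + \<bar>d2\<bar> + \<bar>d3\<bar> + \<bar>d4\<bar>"
  define R where "R = Lh*(3*Q) + E"
  define rest where "rest = 2*d4*d1 + 2*u*(r1 + 5/3*r2 + r3 + r4) + 4*d2*r2 + 2*d3*r3 + 2*d4*r4"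
  have eq: "2*(d1 + 5/3*d2 + d3 + d4) * ((-d1 + 3*z*d2 + z*d3 + z*d4 + r1) + 5/3*(-3*z*d2 + r2)
            + (2*z*d2 - z*d3 + r3) + (d1 - z*d4 + r4))
         + 4*d2*(-3*z*d2 + r2) + 2*d3*(2*z*d2 - z*d3 + r3) + 2*d4*(d1 - z*d4 + r4)
       = z*(-12*d2^2 + 4*d2*d3 - 2*d3^2 - 2*d4^2) + rest"
    unfolding rest_def u_def by (simp add: algebra_simps power2_eq_square)
  have z0: "z \<ge> 0" using z Lh by linarith
  have fast: "-12*d2^2 + 4*d2*d3 - 2*d3^2 - 2*d4^2 \<le> - F"
  proof -
    have "0 \<le> (d3 - 2*d2)^2 + 7*d2^2 + d4^2" by simp
    thus ?thesis unfolding F_def by (simp add: algebra_simps power2_eq_square)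
  qed
  have fastz: "z*(-12*d2^2 + 4*d2*d3 - 2*d3^2 - 2*d4^2) \<le> - z*F"
    using mult_left_mono[OF fast z0] by simp
  have d1: "d1 = u - 5/3*d2 - d3 - d4" unfolding u_def by simp
  have ad1: "\<bar>d1\<bar> \<le> 2*Q" unfolding d1 Q_def
    using abs_ge_self[of u] abs_ge_minus_self[of u] abs_ge_self[of d2] abs_ge_minus_self[of d2]
      abs_ge_self[of d3] abs_ge_minus_self[of d3] abs_ge_self[of d4] abs_ge_minus_self[of d4]
    by (simp add: abs_le_iff)
  have P: "\<bar>d1\<bar>+\<bar>d2\<bar>+\<bar>d3\<bar>+\<bar>d4\<bar> \<le> 3*Q" using ad1 unfolding Q_def by (simp, linarith)
  have Rb: "Lh*(\<bar>d1\<bar>+\<bar>d2\<bar>+\<bar>d3\<bar>+\<bar>d4\<bar>) + E \<le> R"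
    unfolding R_def using mult_left_mono[OF P Lh] by simp
  have r1': "\<bar>r1\<bar> \<le> R" and r2': "\<bar>r2\<bar> \<le> R" and r3': "\<bar>r3\<bar> \<le> R" and r4': "\<bar>r4\<bar> \<le> R"
    using r1 r2 r3 r4 Rb by linarith+
  have Q0: "Q \<ge> 0" unfolding Q_def by simp
  have R0: "R \<ge> 0" unfolding R_def using Lh E Q0 by simp
  have t1: "2*d4*d1 \<le> 2*Q*(2*Q)"
  proof -
    have "2*d4*d1 \<le> 2*(\<bar>d4\<bar>*\<bar>d1\<bar>)" by (simp add: abs_mult[symmetric])
    also have "\<dots> \<le> 2*(Q*(2*Q))"
      by (intro mult_left_mono mult_mono ad1) (auto simp: Q_def)
    finally show ?thesis by simp
  qed
  have t2: "2*u*(r1 + 5/3*r2 + r3 + r4) \<le> 2*\<bar>u\<bar>*(14/3*R)"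
  proof -
    have "\<bar>r1 + 5/3*r2 + r3 + r4\<bar> \<le> 14/3*R" using r1' r2' r3' r4' by (simp only: abs_le_iff) linarith
    hence "\<bar>u\<bar>*\<bar>r1 + 5/3*r2 + r3 + r4\<bar> \<le> \<bar>u\<bar>*(14/3*R)" by (intro mult_left_mono) auto
    moreover have "u*(r1 + 5/3*r2 + r3 + r4) \<le> \<bar>u\<bar>*\<bar>r1 + 5/3*r2 + r3 + r4\<bar>"
      unfolding abs_mult[symmetric] by (rule abs_ge_self)
    ultimately show ?thesis by linarith
  qed
  have t3: "d2*r2 \<le> \<bar>d2\<bar>*R" "d3*r3 \<le> \<bar>d3\<bar>*R" "d4*r4 \<le> \<bar>d4\<bar>*R"
    using mult_left_mono[OF r2', of "\<bar>d2\<bar>"] mult_left_mono[OF r3', of "\<bar>d3\<bar>"]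
      mult_left_mono[OF r4', of "\<bar>d4\<bar>"]
    by (auto simp: abs_mult[symmetric] intro: order_trans[OF abs_ge_self])
  have "rest \<le> 4*Q^2 + 10*Q*R"
  proof -
    have "rest \<le> 4*Q^2 + (28/3*\<bar>u\<bar> + 4*\<bar>d2\<bar> + 2*\<bar>d3\<bar> + 2*\<bar>d4\<bar>)*R"
      unfolding rest_def using t1 t2 t3 by (simp add: algebra_simps power2_eq_square)
    also have "\<dots> \<le> 4*Q^2 + (10*Q)*R"
      by (intro add_left_mono mult_right_mono R0) (auto simp: Q_def)
    finally show ?thesis by simp
  qed
  also have "\<dots> = (4 + 30*Lh)*Q^2 + 10*Q*E" unfolding R_def by (simp add: algebra_simps power2_eq_square)
  also have "\<dots> \<le> (5 + 30*Lh)*Q^2 + 25*E^2"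
  proof -
    have "10*Q*E \<le> Q^2 + 25*E^2" using sum_squares_ge_zero
    proof -
      have "0 \<le> (Q - 5*E)^2" by simp
      thus ?thesis by (simp add: algebra_simps power2_eq_square)
    qed
    thus ?thesis by (simp add: algebra_simps)
  qed
  also have "\<dots> \<le> (5 + 30*Lh)*(4*(u^2 + F)) + 25*E^2"
  proof -
    have "Q^2 \<le> 4*(u^2+F)"
    proof -
      have "0 \<le> (\<bar>u\<bar>-\<bar>d2\<bar>)^2 + (\<bar>u\<bar>-\<bar>d3\<bar>)^2 + (\<bar>u\<bar>-\<bar>d4\<bar>)^2 + (\<bar>d2\<bar>-\<bar>d3\<bar>)^2
         + (\<bar>d2\<bar>-\<bar>d4\<bar>)^2 + (\<bar>d3\<bar>-\<bar>d4\<bar>)^2" by simp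
      thus ?thesis unfolding Q_def F_def by (simp add: algebra_simps power2_eq_square)
    qed
    thus ?thesis using Lh by (intro add_right_mono mult_left_mono) auto
  qed
  finally have restb: "rest \<le> (20 + 120*Lh)*(u^2 + F) + 25*E^2" by (simp add: algebra_simps)
  have F0: "F \<ge> 0" unfolding F_def by simp
  have "z*F \<ge> (20 + 120*Lh)*F" using mult_right_mono[OF z F0] .
  hence "z*(-12*d2^2 + 4*d2*d3 - 2*d3^2 - 2*d4^2) + rest \<le> (20 + 120*Lh)*u^2 + 25*E^2"
    using fastz restb by (simp add: algebra_simps)
  also have "\<dots> \<le> (20 + 120*Lh) * (u^2 + 2*d2^2 + d3^2 + d4^2) + 25*E^2"
    using Lh by (intro add_right_mono mult_left_mono) auto
  finally show ?thesis unfolding eq u_def .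
qed



lemma vec_comp_deriv:
  assumes "(f has_vector_derivative D) F"
  shows "((\<lambda>t. f t $ i) has_real_derivative D $ i) F"
proof -
  have "((\<lambda>t. f t $ i) has_derivative (\<lambda>h. (h *\<^sub>R D) $ i)) F"
    using bounded_linear.has_derivative[OF bounded_linear_vec_nth assms[unfolded has_vector_derivative_def]] .
  moreover have "(\<lambda>h. (h *\<^sub>R D) $ i) = (*) (D $ i)" by (rule ext) simp
  ultimately show ?thesis by (simp add: has_field_derivative_def)
qed

lemma matA_rows:
  "(matA z *v x)$1 = -x$1 + 3*z*x$2 + z*x$3 + z*x$4"
  "(matA z *v x)$2 = -3*z*x$2"
  "(matA z *v x)$3 = 2*z*x$2 - z*x$3"
  "(matA z *v x)$4 = x$1 - z*x$4"
  by (simp_all add: matA_def matrix_vector_mult_def sum_4)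

lemma Lmat_row:
  fixes M :: "real^4^4"
  assumes "\<And>i j. \<bar>M$i$j\<bar> \<le> L"
  shows "\<bar>(M *v x)$i\<bar> \<le> L*(\<bar>x$1\<bar>+\<bar>x$2\<bar>+\<bar>x$3\<bar>+\<bar>x$4\<bar>)"
proof -
  have "\<bar>(M *v x)$i\<bar> = \<bar>\<Sum>j\<in>UNIV. M$i$j * x$j\<bar>" by (simp add: matrix_vector_mult_def)
  also have "\<dots> \<le> (\<Sum>j\<in>UNIV. \<bar>M$i$j * x$j\<bar>)" by (rule sum_abs)
  also have "\<dots> \<le> (\<Sum>j\<in>UNIV. L * \<bar>x$j\<bar>)"
    by (intro sum_mono) (simp add: abs_mult mult_right_mono assms)
  also have "\<dots> = L*(\<bar>x$1\<bar>+\<bar>x$2\<bar>+\<bar>x$3\<bar>+\<bar>x$4\<bar>)" by (simp add: sum_4 algebra_simps)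
  finally show ?thesis .
qed


lemma sq4: fixes a b c e :: real shows "(a+b+c+e)^2 \<le> 4*(a^2+b^2+c^2+e^2)"
proof -
  have "0 \<le> (a-b)^2 + (a-c)^2 + (a-e)^2 + (b-c)^2 + (b-e)^2 + (c-e)^2" by simp
  thus ?thesis by (simp add: algebra_simps power2_eq_square)
qed

lemma abs_le_sqrt: fixes x c W :: real
  assumes "x^2 \<le> c^2 * W" "c \<ge> 0" shows "\<bar>x\<bar> \<le> c * sqrt W"
proof -
  have "\<bar>x\<bar> = sqrt (x^2)" by simp
  also have "\<dots> \<le> sqrt (c^2 * W)" using assms(1) by (rule real_sqrt_le_mono)
  also have "\<dots> = c * sqrt W" using assms(2) by (simp add: real_sqrt_mult)
  finally show ?thesis .
qed

theorem mainTheorem10: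
  fixes t1 \<tau> Lh :: real
    and h :: "real^4 \<Rightarrow> real^4"
    and Lmat :: "real^4 \<Rightarrow> real^4 \<Rightarrow> real^4^4"
    and y xh e :: "real \<Rightarrow> real \<Rightarrow> real^4"
  assumes t1_lt: "t1 < \<tau>"
    and Lh_pos: "Lh > 0"
    and h_lin: "\<And>x1 x2. h x1 - h x2 = Lmat x1 x2 *v (x1 - x2)"
    and L_bound: "\<And>x1 x2 i j. \<bar>Lmat x1 x2 $ i $ j\<bar> \<le> Lh"
    and y_ode: "\<And>z t. z > 0 \<Longrightarrow> t \<in> {t1..\<tau>} \<Longrightarrow>
       (y z has_vector_derivative (matA z *v y z t + h (y z t) + e z t)) (at t within {t1..\<tau>})"
    and x_ode: "\<And>z t. z > 0 \<Longrightarrow> t \<in> {t1..\<tau>} \<Longrightarrow>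
       (xh z has_vector_derivative (matA z *v xh z t + h (xh z t))) (at t within {t1..\<tau>})"
    and init: "\<And>z. z > 0 \<Longrightarrow> xh z t1 = y z t1"
    and e_small: "\<exists>K z0. \<forall>z\<ge>z0. z > 0 \<longrightarrow> (\<forall>t\<in>{t1..\<tau>}. norm (e z t) \<le> K / z)"
  shows "\<exists>K z0. \<forall>z\<ge>z0. z > 0 \<longrightarrow> (\<forall>t\<in>{t1..\<tau>}. norm (y z t - xh z t) \<le> K / z)"
proof -
  obtain K0 z0 where K0: "\<And>z t. z \<ge> z0 \<Longrightarrow> z > 0 \<Longrightarrow> t\<in>{t1..\<tau>} \<Longrightarrow> norm (e z t) \<le> K0 / z"
    using e_small by blast
  define Kp where "Kp = max K0 0"
  define C where "C = 20 + 120*Lh"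
  define B where "B = 25*(\<tau>-t1)*exp(C*(\<tau>-t1))"
  have C0: "C \<ge> 0" using Lh_pos unfolding C_def by simp
  have B0: "B \<ge> 0" using t1_lt unfolding B_def by simp
  have Kp0: "Kp \<ge> 0" unfolding Kp_def by simp
  define S where "S = {t1..\<tau>}"
  have "\<forall>z\<ge>max z0 C. z > 0 \<longrightarrow> (\<forall>t\<in>{t1..\<tau>}. norm (y z t - xh z t) \<le> (7* sqrt B*Kp) / z)"
  proof (intro allI impI ballI)
    fix z t assume zge: "max z0 C \<le> z" and zpos: "z > 0" and t: "t \<in> {t1..\<tau>}"
    define E where "E = Kp / z"
    have E0: "E \<ge> 0" unfolding E_def using Kp0 zpos by simp
    have eb: "\<And>s. s \<in> S \<Longrightarrow> norm (e z s) \<le> E"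
    proof -
      fix s assume "s \<in> S"
      hence "norm (e z s) \<le> K0 / z" using K0[of z s] zge zpos unfolding S_def by auto
      also have "\<dots> \<le> E" unfolding E_def Kp_def using zpos by (simp add: divide_right_mono)
      finally show "norm (e z s) \<le> E" .
    qed
    define d where "d s = y z s - xh z s" for s
    define M where "M s = Lmat (y z s) (xh z s)" for s
    define r where "r s = M s *v d s + e z s" for s
    define D where "D s = matA z *v d s + r s" for s
    have dder: "(d has_vector_derivative D s) (at s within S)" if s: "s \<in> S" for s
    proof -
      have "((\<lambda>s. y z s - xh z s) has_vector_derivative
          (matA z *v y z s + h (y z s) + e z s) - (matA z *v xh z s + h (xh z s))) (at s within S)"
        using y_ode[OF zpos] x_ode[OF zpos] s unfolding S_def by (intro has_vector_derivative_diff) auto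
      moreover have "(matA z *v y z s + h (y z s) + e z s) - (matA z *v xh z s + h (xh z s)) = D s"
      proof -
        have "h (y z s) - h (xh z s) = M s *v d s" unfolding M_def d_def by (rule h_lin)
        thus ?thesis unfolding D_def r_def d_def
          by (simp add: matrix_vector_mult_diff_distrib algebra_simps)
      qed
      ultimately show ?thesis unfolding d_def[abs_def] by simp
    qed
    have rb: "\<bar>r s $ k\<bar> \<le> Lh*(\<bar>d s$1\<bar>+\<bar>d s$2\<bar>+\<bar>d s$3\<bar>+\<bar>d s$4\<bar>) + E" if s: "s \<in> S" for s k
    proof -
      have "\<bar>r s $ k\<bar> \<le> \<bar>(M s *v d s)$k\<bar> + \<bar>e z s $ k\<bar>" unfolding r_def by (simp add: abs_triangle_ineq)
      moreover have "\<bar>(M s *v d s)$k\<bar> \<le> Lh*(\<bar>d s$1\<bar>+\<bar>d s$2\<bar>+\<bar>d s$3\<bar>+\<bar>d s$4\<bar>)"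
        unfolding M_def by (rule Lmat_row) (rule L_bound)
      moreover have "\<bar>e z s $ k\<bar> \<le> E" using component_le_norm_cart[of "e z s" k] eb[OF s] by linarith
      ultimately show ?thesis by linarith
    qed
    define W where "W s = (d s$1 + 5/3*d s$2 + d s$3 + d s$4)^2 + 2*(d s$2)^2 + (d s$3)^2 + (d s$4)^2" for s
    define W' where "W' s = 2*(d s$1 + 5/3*d s$2 + d s$3 + d s$4)*(D s$1 + 5/3*D s$2 + D s$3 + D s$4)
       + 4*d s$2*D s$2 + 2*d s$3*D s$3 + 2*d s$4*D s$4" for s
    have Wder: "(W has_real_derivative W' s) (at s within S)" if s: "s \<in> S" for s
    proof -
      note c = vec_comp_deriv[OF dder[OF s]]
      note c1 = c[of 1] and c2 = c[of 2] and c3 = c[of 3] and c4 = c[of 4]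
      show ?thesis unfolding W_def[abs_def] W'_def
        by (rule derivative_eq_intros c1 c2 c3 c4 refl | simp)+ (simp add: algebra_simps)
    qed
    have W'b: "W' s \<le> C * W s + 25*E^2" if s: "s \<in> S" for s
    proof -
      have "z \<ge> 20 + 120*Lh" using zge unfolding C_def by simp
      from key_ineq[OF less_imp_le[OF Lh_pos] E0 this rb[OF s, of 1] rb[OF s, of 2] rb[OF s, of 3] rb[OF s, of 4]]
      show ?thesis unfolding W'_def W_def C_def D_def by (simp add: matA_rows)
    qed
    define g where "g s = W s * exp(-C*(s-t1)) - 25*E^2*(s-t1)" for s
    define g' where "g' s = W' s * exp(-C*(s-t1)) + W s * (exp(-C*(s-t1)) * (-C)) - 25*E^2" for s
    have gder: "(g has_real_derivative g' s) (at s within S)" if s: "s \<in> S" for s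
      unfolding g_def[abs_def] g'_def
      by (rule derivative_eq_intros Wder[OF s] refl | simp)+
    have g'neg: "g' s \<le> 0" if s: "s \<in> S" for s
    proof -
      have ex: "exp(-C*(s-t1)) \<le> 1" "exp(-C*(s-t1)) > 0" using s C0 unfolding S_def by auto
      have "g' s = (W' s - C * W s) * exp(-C*(s-t1)) - 25*E^2" unfolding g'_def by (simp add: algebra_simps)
      also have "\<dots> \<le> 25*E^2 * exp(-C*(s-t1)) - 25*E^2"
        using mult_right_mono[of "W' s - C * W s" "25*E^2" "exp(-C*(s-t1))"] W'b[OF s] ex by simp
      also have "\<dots> \<le> 0" using mult_left_mono[OF ex(1), of "25*E^2"] by simp
      finally show ?thesis .
    qed
    have gcont: "continuous_on S g"
      using gder DERIV_continuous continuous_on_eq_continuous_within by blast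
    have gt: "g t \<le> g t1"
    proof (rule DERIV_nonpos_imp_decreasing_open[of t1 t g])
      show "t1 \<le> t" using t by simp
      show "continuous_on {t1..t} g" by (rule continuous_on_subset[OF gcont[unfolded S_def]]) (use t in auto)
      fix x assume x: "t1 < x" "x < t"
      hence xS: "x \<in> S" and "x < \<tau>" using t unfolding S_def by auto
      hence "at x within S = at x" unfolding S_def using x by (intro at_within_Icc_at) auto
      thus "\<exists>y. (g has_real_derivative y) (at x) \<and> y \<le> 0" using gder[OF xS] g'neg[OF xS] by auto
    qed
    have dt1: "d t1 = 0" unfolding d_def using init[OF zpos] by simp
    have "g t1 = 0" unfolding g_def W_def dt1 by simp
    with gt have "W t * exp(-C*(t-t1)) \<le> 25*E^2*(t-t1)" unfolding g_def by simp
    hence "W t * exp(-C*(t-t1)) * exp(C*(t-t1)) \<le> 25*E^2*(t-t1) * exp(C*(t-t1))"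
      by (intro mult_right_mono) auto
    hence "W t \<le> 25*E^2*(t-t1) * exp(C*(t-t1))"
      by (simp add: mult.assoc exp_add[symmetric])
    also have "\<dots> \<le> B * E^2"
    proof -
      have "(t-t1) * exp(C*(t-t1)) \<le> (\<tau>-t1) * exp(C*(\<tau>-t1))"
        using t C0 by (intro mult_mono) (auto intro: mult_left_mono)
      hence "(25*E^2) * ((t-t1) * exp(C*(t-t1))) \<le> (25*E^2) * ((\<tau>-t1) * exp(C*(\<tau>-t1)))"
        by (intro mult_left_mono) auto
      thus ?thesis unfolding B_def by (simp add: algebra_simps)
    qed
    finally have WB: "W t \<le> B * E^2" .
    define u where "u = d t$1 + 5/3*d t$2 + d t$3 + d t$4"
    have Wt: "W t = u^2 + 2*(d t$2)^2 + (d t$3)^2 + (d t$4)^2" unfolding W_def u_def ..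
    have a1: "\<bar>d t$1\<bar> \<le> 4 * sqrt (W t)"
    proof (rule abs_le_sqrt)
      have "(d t$1)^2 = (u + (-5/3*d t$2) + (-d t$3) + (-d t$4))^2" unfolding u_def by simp
      also have "\<dots> \<le> 4*(u^2 + (-5/3*d t$2)^2 + (-d t$3)^2 + (-d t$4)^2)" by (rule sq4)
      also have "\<dots> \<le> 4^2 * W t" unfolding Wt by (simp add: power2_eq_square)
      finally show "(d t$1)^2 \<le> 4^2 * W t" .
    qed simp
    have a2: "\<bar>d t$2\<bar> \<le> 1 * sqrt (W t)" by (rule abs_le_sqrt) (auto simp: Wt)
    have a3: "\<bar>d t$3\<bar> \<le> 1 * sqrt (W t)" by (rule abs_le_sqrt) (auto simp: Wt)
    have a4: "\<bar>d t$4\<bar> \<le> 1 * sqrt (W t)" by (rule abs_le_sqrt) (auto simp: Wt)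
    have "norm (d t) \<le> \<bar>d t$1\<bar> + \<bar>d t$2\<bar> + \<bar>d t$3\<bar> + \<bar>d t$4\<bar>"
      using norm_le_l1_cart[of "d t"] by (simp add: sum_4)
    also have "\<dots> \<le> 7 * sqrt (W t)" using a1 a2 a3 a4 by simp
    also have "\<dots> \<le> 7 * sqrt (B * E^2)" using WB by simp
    also have "\<dots> = 7 * sqrt B * E" using E0 by (simp add: real_sqrt_mult)
    also have "\<dots> = (7* sqrt B*Kp) / z" unfolding E_def by simp
    finally show "norm (y z t - xh z t) \<le> (7* sqrt B*Kp) / z" unfolding d_def .
  qed
  thus ?thesis by blast
qed

end
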